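(* Let $n$ be a positive even integer and let $a_1,\dots,a_n$ be positive integers. Let $1\le m\le n$ and write $m=2l+r_0$ with $r_0\in\{0,1\}$. For integers $i$ with $r_0\le i\le \frac{n-m+r_0}{2}$ define $$\Gamma_n(m,i)=\sum_{j=0}^{\min\{m-1,\,2i-r_0\}}(-1)^j\,\gamma_n(m-1-j)\,\gamma_{2i-r_0}(j).$$ Then $$\gamma_n(m)=\sum_{i=r_0}^{\frac{n-m+r_0}{2}}a_{2i+1-r_0}\,\Gamma_n(m,i).$$
   Context: For $k\ge1$ and $1\le l\le k$, $I_{k,l}$ is the set of strictly increasing sequences $(t_1,\dots,t_l)$ in $\{1,\dots,k\}$ with $t_i\equiv k+i-l\pmod2$ for all $i$. For $0\le k\le n$ and $1\le l\le k$ define $\gamma_k(l)=\sum_{(t_1,\dots,t_l)\in I_{k,l}}a_{t_1}\cdots a_{t_l}$. Set $\gamma_k(0)=1$ for all $k\ge0$, including $k=0$. *)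

theory Defs
  imports Main
begin

text \<open>I_{k,l}: strictly increasing sequences (t_1,...,t_l) in {1..k} with
  t_i = k + i - l (mod 2), represented as lists (0-based list index i
  corresponds to t_{i+1}).\<close>
definition I_set :: "nat \<Rightarrow> nat \<Rightarrow> nat list set" where
  "I_set k l = {ts. length ts = l \<and> sorted_wrt (<) ts \<and> set ts \<subseteq> {1..k} \<and>
      (\<forall>i<l. int (ts ! i) mod 2 = (int k + int (i + 1) - int l) mod 2)}"

definition gamma :: "(nat \<Rightarrow> int) \<Rightarrow> nat \<Rightarrow> nat \<Rightarrow> int" where
  "gamma a k l = (if l = 0 then 1 else (\<Sum>ts\<in>I_set k l. prod_list (map a ts)))"

definition Gamma :: "(nat \<Rightarrow> int) \<Rightarrow> nat \<Rightarrow> nat \<Rightarrow> nat \<Rightarrow> int" where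
  "Gamma a n m i = (\<Sum>j = 0..min (m - 1) (2 * i - m mod 2).
      (-1) ^ j * gamma a n (m - 1 - j) * gamma a (2 * i - m mod 2) j)"

end

theory Submission
  imports Defs
begin


lemma I_set_finite: "finite (I_set k l)"
proof -
  have "I_set k l \<subseteq> {xs. set xs \<subseteq> {1..k} \<and> length xs = l}"
    unfolding I_set_def by auto
  moreover have "finite {xs. set xs \<subseteq> {1..k::nat} \<and> length xs = l}"
    by (rule finite_lists_length_eq) simp
  ultimately show ?thesis by (rule finite_subset)
qed

lemma I_set_0: "I_set k 0 = {[]}"
  unfolding I_set_def by auto

lemma gamma_sum: "gamma a k l = (\<Sum>ts\<in>I_set k l. prod_list (map a ts))"
  by (simp add: gamma_def I_set_0)

lemma I_set_big: assumes "l > k" shows "I_set k l = {}"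
proof (rule ccontr)
  assume "I_set k l \<noteq> {}"
  then obtain ts where ts: "ts \<in> I_set k l" by blast
  hence d: "distinct ts" and len: "length ts = l" and s: "set ts \<subseteq> {1..k}"
    unfolding I_set_def by (auto simp: strict_sorted_iff)
  have "l = card (set ts)" using distinct_card[OF d] len by simp
  also have "\<dots> \<le> card {1..k}" by (rule card_mono[OF _ s]) simp
  finally show False using assms by simp
qed

lemma gamma_zero: "l > k \<Longrightarrow> gamma a k l = 0"
  by (simp add: gamma_sum I_set_big)

lemma gamma_1_1: "gamma a 1 1 = a 1"
proof -
  have "I_set 1 1 = {[1]}"
    unfolding I_set_def by (auto simp: length_Suc_conv)
  thus ?thesis by (simp add: gamma_def)
qed

lemma I_set_split:
  assumes k: "k \<ge> 2" and l: "l \<ge> 1"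
  shows "I_set k l = (\<lambda>ts. ts @ [k]) ` I_set (k-1) (l-1) \<union> I_set (k-2) l"
proof (intro equalityI subsetI)
  fix ts assume "ts \<in> I_set k l"
  hence len: "length ts = l" and so: "sorted_wrt (<) ts" and st: "set ts \<subseteq> {1..k}"
    and par: "\<And>i. i < l \<Longrightarrow> int (ts ! i) mod 2 = (int k + int (i + 1) - int l) mod 2"
    unfolding I_set_def by auto
  from len l obtain xs y where ts: "ts = xs @ [y]"
    by (metis One_nat_def le_zero_eq length_0_conv not_one_le_zero rev_exhaust)
  have lx: "length xs = l - 1" using len ts by simp
  have py: "int y mod 2 = int k mod 2" using par[of "l-1"] l ts lx
    by (simp add: nth_append)
  have sx: "sorted_wrt (<) xs" and lt: "\<And>x. x \<in> set xs \<Longrightarrow> x < y"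
    using so ts by (auto simp: sorted_wrt_append)
  have yk: "y \<le> k" "y \<ge> 1" using st ts by auto
  have parx: "\<And>i. i < l - 1 \<Longrightarrow> int (xs ! i) mod 2 = (int k + int (i + 1) - int l) mod 2"
  proof -
    fix i assume i: "i < l - 1"
    hence "i < l" by simp
    moreover have "ts ! i = xs ! i" using ts lx i by (simp add: nth_append)
    ultimately show "int (xs ! i) mod 2 = (int k + int (i + 1) - int l) mod 2" using par by metis
  qed
  show "ts \<in> (\<lambda>ts. ts @ [k]) ` I_set (k-1) (l-1) \<union> I_set (k-2) l"
  proof (cases "y = k")
    case True
    have "xs \<in> I_set (k-1) (l-1)"
      unfolding I_set_def
    proof (intro CollectI conjI allI impI)
      show "set xs \<subseteq> {1..k-1}" using lt st ts True by fastforce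
      fix i assume i: "i < l - 1"
      have eq: "int (k-1) + int (i+1) - int (l-1) = int k + int (i+1) - int l" using k l by simp
      show "int (xs ! i) mod 2 = (int (k - 1) + int (i + 1) - int (l - 1)) mod 2"
        by (simp only: eq parx[OF i])
    qed (use lx sx in auto)
    thus ?thesis using ts True by auto
  next
    case False
    have "y \<le> k - 2" using False yk py by presburger
    have "ts \<in> I_set (k-2) l"
      unfolding I_set_def
    proof (intro CollectI conjI allI impI)
      show "set ts \<subseteq> {1..k-2}" using lt st ts \<open>y \<le> k - 2\<close> by fastforce
      fix i assume i: "i < l"
      have "int (k-2) + int (i+1) - int l = int k + int (i+1) - int l - 2" using k by simp
      thus "int (ts ! i) mod 2 = (int (k - 2) + int (i + 1) - int l) mod 2"
        using par[OF i] by presburger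
    qed (use len so in auto)
    thus ?thesis by auto
  qed
next
  fix ts assume "ts \<in> (\<lambda>ts. ts @ [k]) ` I_set (k-1) (l-1) \<union> I_set (k-2) l"
  thus "ts \<in> I_set k l"
  proof
    assume "ts \<in> (\<lambda>ts. ts @ [k]) ` I_set (k-1) (l-1)"
    then obtain xs where ts: "ts = xs @ [k]" and "xs \<in> I_set (k-1) (l-1)" by auto
    hence len: "length xs = l - 1" and so: "sorted_wrt (<) xs" and st: "set xs \<subseteq> {1..k-1}"
      and par: "\<And>i. i < l-1 \<Longrightarrow> int (xs ! i) mod 2 = (int (k-1) + int (i + 1) - int (l-1)) mod 2"
      unfolding I_set_def by auto
    show ?thesis unfolding I_set_def
    proof (intro CollectI conjI allI impI)
      show "length ts = l" using ts len l by simp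
      have "\<forall>x\<in>set xs. x < k" using st k by (auto simp: subset_iff)
      thus "sorted_wrt (<) ts" using ts so by (auto simp: sorted_wrt_append)
      show "set ts \<subseteq> {1..k}" using ts st k by (fastforce simp: subset_iff)
      fix i assume i: "i < l"
      show "int (ts ! i) mod 2 = (int k + int (i + 1) - int l) mod 2"
      proof (cases "i < l - 1")
        case True
        have eq: "int (k-1) + int (i+1) - int (l-1) = int k + int (i+1) - int l" using k l by simp
        have "ts ! i = xs ! i" using ts len True by (simp add: nth_append)
        thus ?thesis using par[OF True] by (simp only: eq)
      next
        case False
        hence "i = l - 1" using i by simp
        thus ?thesis using ts len l by (simp add: nth_append)
      qed
    qed
  next
    assume "ts \<in> I_set (k-2) l"
    hence len: "length ts = l" and so: "sorted_wrt (<) ts" and st: "set ts \<subseteq> {1..k-2}"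
      and par: "\<And>i. i < l \<Longrightarrow> int (ts ! i) mod 2 = (int (k-2) + int (i + 1) - int l) mod 2"
      unfolding I_set_def by auto
    show ?thesis unfolding I_set_def
    proof (intro CollectI conjI allI impI)
      show "set ts \<subseteq> {1..k}"
      proof
        fix x assume "x \<in> set ts"
        hence "x \<in> {1..k-2}" using st by blast
        thus "x \<in> {1..k}" by (simp, linarith)
      qed
      fix i assume i: "i < l"
      have "int (k-2) + int (i+1) - int l = int k + int (i+1) - int l - 2" using k by simp
      thus "int (ts ! i) mod 2 = (int k + int (i + 1) - int l) mod 2"
        using par[OF i] by presburger
    qed (use len so in auto)
  qed
qed

lemma gamma_rec:
  assumes k: "k \<ge> 2"
  shows "gamma a k l = (if l = 0 then 0 else a k * gamma a (k-1) (l-1)) + gamma a (k-2) l"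
proof (cases "l = 0")
  case True thus ?thesis by (simp add: gamma_def)
next
  case False
  hence l: "l \<ge> 1" by simp
  have disj: "(\<lambda>ts. ts @ [k]) ` I_set (k-1) (l-1) \<inter> I_set (k-2) l = {}"
  proof -
    { fix xs assume "xs @ [k] \<in> I_set (k-2) l"
      hence "set (xs @ [k]) \<subseteq> {1..k-2}" by (simp add: I_set_def)
      hence False using k by auto } note H = this
    show ?thesis
    proof (rule ccontr)
      assume "(\<lambda>ts. ts @ [k]) ` I_set (k-1) (l-1) \<inter> I_set (k-2) l \<noteq> {}"
      then obtain xs where "xs @ [k] \<in> I_set (k-2) l" by auto
      thus False by (rule H)
    qed
  qed
  have inj: "inj_on (\<lambda>ts. ts @ [k]) (I_set (k-1) (l-1))" by (auto simp: inj_on_def)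
  have "gamma a k l = (\<Sum>ts\<in>(\<lambda>ts. ts @ [k]) ` I_set (k-1) (l-1). prod_list (map a ts))
      + (\<Sum>ts\<in>I_set (k-2) l. prod_list (map a ts))"
    unfolding gamma_sum I_set_split[OF k l]
    by (rule sum.union_disjoint[OF finite_imageI[OF I_set_finite] I_set_finite disj])
  also have "(\<Sum>ts\<in>(\<lambda>ts. ts @ [k]) ` I_set (k-1) (l-1). prod_list (map a ts))
      = (\<Sum>ts\<in>I_set (k-1) (l-1). prod_list (map a ts) * a k)"
    by (subst sum.reindex[OF inj]) simp
  also have "\<dots> = a k * gamma a (k-1) (l-1)"
    by (simp add: gamma_sum sum_distrib_left mult.commute)
  finally show ?thesis using False by (simp add: gamma_sum)
qed



definition gg :: "(nat \<Rightarrow> int) \<Rightarrow> nat \<Rightarrow> nat \<Rightarrow> int" where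
  "gg a k l = (if k = 0 then (if l = 0 then 1 else 0) else gamma a (k-1) l)"

definition cc :: "(nat \<Rightarrow> int) \<Rightarrow> nat \<Rightarrow> nat \<Rightarrow> nat \<Rightarrow> int" where
  "cc a N K L = (\<Sum>j=0..L. (-1)^j * gg a N (L-j) * gg a K j)"

lemma gamma_l0: "gamma a k 0 = 1"
  by (simp add: gamma_def)

lemma gg_rec: "gg a (k+2) l = (if l = 0 then 0 else a (k+1) * gg a (k+1) (l-1)) + gg a k l"
proof (cases "k = 0")
  case True
  show ?thesis
  proof (cases "l = 0")
    case True thus ?thesis using \<open>k=0\<close> by (simp add: gg_def gamma_def)
  next
    case False
    show ?thesis
    proof (cases "l = 1")
      case True thus ?thesis using \<open>k=0\<close> by (simp add: gg_def gamma_l0 gamma_1_1[simplified])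
    next
      case False
      thus ?thesis using \<open>k=0\<close> \<open>l\<noteq>0\<close> by (simp add: gg_def gamma_zero)
    qed
  qed
next
  case False
  have "k + 1 \<ge> 2" using False by simp
  from gamma_rec[OF this, of a l] False show ?thesis
    by (simp add: gg_def)
qed

lemma gg_zero: "(k = 0 \<and> l > 0) \<or> (k > 0 \<and> l \<ge> k) \<Longrightarrow> gg a k l = 0"
  by (auto simp: gg_def gamma_zero)

lemma gg_01: "k \<le> 1 \<Longrightarrow> gg a k l = (if l = 0 then 1 else 0)"
  by (cases "k = 0") (auto simp: gg_def gamma_l0 gamma_zero)

lemma cc_recN:
  assumes "N \<ge> 2" "L \<ge> 1"
  shows "cc a N K L = a (N-1) * cc a (N-1) K (L-1) + cc a (N-2) K L"
proof -
  obtain k where N: "N = k + 2" using assms(1) by (metis add.commute le_Suc_ex)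
  obtain L' where L: "L = Suc L'" using assms(2) by (metis Suc_le_D One_nat_def)
  have "cc a N K L = (\<Sum>j=0..L. (-1)^j * ((if L - j = 0 then 0 else a (k+1) * gg a (k+1) (L-j-1))) * gg a K j)
      + (\<Sum>j=0..L. (-1)^j * gg a k (L-j) * gg a K j)"
    unfolding cc_def N gg_rec by (simp add: algebra_simps sum.distrib)
  also have "(\<Sum>j=0..L. (-1)^j * ((if L - j = 0 then 0 else a (k+1) * gg a (k+1) (L-j-1))) * gg a K j)
      = (\<Sum>j=0..L'. (-1)^j * (a (k+1) * gg a (k+1) (L'-j)) * gg a K j)"
  proof -
    define F where "F j = (-1)^j * ((if L - j = 0 then 0 else a (k+1) * gg a (k+1) (L-j-1))) * gg a K j" for j
    have "(\<Sum>j=0..L. F j) = (\<Sum>j=0..L'. F j) + F (Suc L')"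
      unfolding L by (rule sum.atLeast0_atMost_Suc)
    also have "F (Suc L') = 0" unfolding F_def L by simp
    also have "(\<Sum>j=0..L'. F j) = (\<Sum>j=0..L'. (-1)^j * (a (k+1) * gg a (k+1) (L'-j)) * gg a K j)"
      by (rule sum.cong) (auto simp: F_def L Suc_diff_le)
    finally show ?thesis unfolding F_def by simp
  qed
  also have "\<dots> = a (k+1) * cc a (k+1) K L'"
    by (simp add: cc_def sum_distrib_left algebra_simps)
  finally show ?thesis by (simp add: N L cc_def)
qed

lemma cc_recK:
  assumes "K \<ge> 2" "L \<ge> 1"
  shows "cc a N K L = - a (K-1) * cc a N (K-1) (L-1) + cc a N (K-2) L"
proof -
  obtain k where K: "K = k + 2" using assms(1) by (metis add.commute le_Suc_ex)
  obtain L' where L: "L = Suc L'" using assms(2) by (metis Suc_le_D One_nat_def)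
  have "cc a N K L = (\<Sum>j=0..L. (-1)^j * gg a N (L-j) * (if j = 0 then 0 else a (k+1) * gg a (k+1) (j-1)))
      + (\<Sum>j=0..L. (-1)^j * gg a N (L-j) * gg a k j)"
    unfolding cc_def K gg_rec by (simp add: algebra_simps sum.distrib)
  also have "(\<Sum>j=0..L. (-1)^j * gg a N (L-j) * (if j = 0 then 0 else a (k+1) * gg a (k+1) (j-1)))
      = (\<Sum>j=0..L'. (-1)^(Suc j) * gg a N (L'-j) * (a (k+1) * gg a (k+1) j))"
    unfolding L atLeast0AtMost sum.atMost_Suc_shift by simp
  also have "\<dots> = - a (k+1) * cc a N (k+1) L'"
    by (simp add: cc_def sum_distrib_left algebra_simps)
  finally show ?thesis by (simp add: K L cc_def)
qed

lemma cc_same1: "cc a N N 1 = 0"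
  by (simp add: cc_def)

lemma cc_small: "N \<le> 1 \<Longrightarrow> K \<le> 1 \<Longrightarrow> m \<ge> 1 \<Longrightarrow> cc a N K m = 0"
  unfolding cc_def by (intro sum.neutral) (auto simp: gg_01)

lemma cc_K01: "K \<le> 1 \<Longrightarrow> cc a N K L = gg a N L"
proof -
  assume K: "K \<le> 1"
  have "cc a N K L = (\<Sum>j=0..L. if j = 0 then gg a N L else 0)"
    unfolding cc_def by (intro sum.cong) (auto simp: gg_01[OF K])
  thus ?thesis by simp
qed

lemma odd_plus2: "odd (x + 2) \<Longrightarrow> odd (x::nat)"
  by simp

lemma cc_Z:
  "m \<ge> 1 \<Longrightarrow> N < K + m \<Longrightarrow> K < N + m \<Longrightarrow> odd (N + K + m) \<Longrightarrow> cc a N K m = 0"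
proof (induction "N + K" arbitrary: N K m rule: less_induct)
  case less
  note P = less.prems
  show ?case
  proof (cases "N + 3 \<le> K + m \<and> K \<ge> 2")
    case True
    have m2: "m \<ge> 2" using P(3) True by linarith
    have "cc a N (K-1) (m-1) = 0"
    proof (rule less.hyps)
      show "N + (K - 1) < N + K" using True by linarith
      show "1 \<le> m - 1" using m2 by linarith
      show "N < K - 1 + (m - 1)" using True m2 by linarith
      show "K - 1 < N + (m - 1)" using P(3) True m2 by linarith
      have e: "N + (K - 1) + (m - 1) + 2 = N + K + m" using True m2 by linarith
      show "odd (N + (K - 1) + (m - 1))" by (rule odd_plus2) (unfold e, rule P(4))
    qed
    moreover have "cc a N (K-2) m = 0"
    proof (rule less.hyps)
      show "N + (K - 2) < N + K" using True by linarith
      show "1 \<le> m" using m2 by linarith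
      show "N < K - 2 + m" using True m2 by linarith
      show "K - 2 < N + m" using P(3) True m2 by linarith
      have e: "N + (K - 2) + m + 2 = N + K + m" using True m2 by linarith
      show "odd (N + (K - 2) + m)" by (rule odd_plus2) (unfold e, rule P(4))
    qed
    ultimately show ?thesis using cc_recK[of K m a N] True P(1) by simp
  next
    case F1: False
    show ?thesis
    proof (cases "K + 3 \<le> N + m \<and> N \<ge> 2")
      case True
      have m2: "m \<ge> 2" using P(2) True by linarith
      have "cc a (N-1) K (m-1) = 0"
      proof (rule less.hyps)
        show "N - 1 + K < N + K" using True by linarith
        show "1 \<le> m - 1" using m2 by linarith
        show "N - 1 < K + (m - 1)" using P(2) True m2 by linarith
        show "K < N - 1 + (m - 1)" using True m2 by linarith
        have e: "N - 1 + K + (m - 1) + 2 = N + K + m" using True m2 by linarith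
        show "odd (N - 1 + K + (m - 1))" by (rule odd_plus2) (unfold e, rule P(4))
      qed
      moreover have "cc a (N-2) K m = 0"
      proof (rule less.hyps)
        show "N - 2 + K < N + K" using True by linarith
        show "1 \<le> m" using m2 by linarith
        show "N - 2 < K + m" using P(2) True m2 by linarith
        show "K < N - 2 + m" using True m2 by linarith
        have e: "N - 2 + K + m + 2 = N + K + m" using True m2 by linarith
        show "odd (N - 2 + K + m)" by (rule odd_plus2) (unfold e, rule P(4))
      qed
      ultimately show ?thesis using cc_recN[of N m a K] True P(1) by simp
    next
      case F2: False
      show ?thesis
      proof (cases "N \<le> 1 \<and> K \<le> 1")
        case True thus ?thesis using cc_small P(1) by blast
      next
        case False
        have "K = N \<and> m = 1" using F1 F2 False P(1) P(2) P(3) P(4) by presburger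
        thus ?thesis using cc_same1 by simp
      qed
    qed
  qed
qed



lemma telescope_nat:
  fixes f :: "nat \<Rightarrow> int"
  shows "r \<le> Suc M \<Longrightarrow> (\<Sum>i=r..M. f i - f (Suc i)) = f r - f (Suc M)"
proof (induction M)
  case 0 thus ?case by (cases r) auto
next
  case (Suc M)
  show ?case
  proof (cases "r = Suc (Suc M)")
    case True thus ?thesis by simp
  next
    case False
    hence "r \<le> Suc M" using Suc.prems by simp
    thus ?thesis using Suc.IH by (simp add: sum.cl_ivl_Suc)
  qed
qed

lemma Gamma_cc:
  assumes "m \<ge> 1"
  shows "Gamma a n m i = cc a (n+1) (2 * i - m mod 2 + 1) (m-1)"
proof -
  define s where "s = 2 * i - m mod 2"
  have "Gamma a n m i = (\<Sum>j=0..min (m-1) s. (-1)^j * gg a (n+1) (m-1-j) * gg a (s+1) j)"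
    unfolding Gamma_def s_def gg_def by simp
  also have "\<dots> = (\<Sum>j=0..m-1. (-1)^j * gg a (n+1) (m-1-j) * gg a (s+1) j)"
    by (rule sum.mono_neutral_left) (auto simp: gg_zero)
  finally show ?thesis unfolding cc_def s_def .
qed

theorem lemma3:
  fixes a :: "nat \<Rightarrow> int" and n m :: nat
  assumes "n > 0" and "even n"
    and "\<And>i. 1 \<le> i \<Longrightarrow> i \<le> n \<Longrightarrow> a i > 0"
    and "1 \<le> m" and "m \<le> n"
  shows "gamma a n m =
    (\<Sum>i = m mod 2 .. (n - m + m mod 2) div 2. a (2 * i + 1 - m mod 2) * Gamma a n m i)"
proof -
  define r where "r = m mod 2"
  define M where "M = (n - m + r) div 2"
  define f where "f i = cc a (n+1) (2 * i - r) m" for i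
  have r1: "r \<le> 1" unfolding r_def by simp
  have trm: "a (2 * i + 1 - r) * Gamma a n m i = f i - f (Suc i)" if i: "i \<ge> r" for i
  proof -
    define s where "s = 2 * i - r"
    have s1: "2 * i + 1 - r = s + 1" and s2: "2 * Suc i - r = s + 2" using i r1 unfolding s_def by auto
    have "cc a (n+1) (s+2) m = - a (s+1) * cc a (n+1) (s+1) (m-1) + cc a (n+1) s m"
      using cc_recK[of "s+2" m a "n+1"] assms(4) by simp
    thus ?thesis unfolding f_def s2 s1 Gamma_cc[OF assms(4)] r_def[symmetric] s_def[symmetric]
      by simp
  qed
  have "(\<Sum>i = r .. M. a (2 * i + 1 - r) * Gamma a n m i) = (\<Sum>i = r .. M. f i - f (Suc i))"
    by (rule sum.cong[OF refl], rule trm) simp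
  also have "\<dots> = f r - f (Suc M)"
    by (rule telescope_nat) (use r1 in simp)
  also have "f r = gamma a n m"
    unfolding f_def using r1 by (simp add: cc_K01 gg_def)
  also have "f (Suc M) = 0"
  proof -
    have dm: "m = 2 * (m div 2) + r" unfolding r_def by simp
    have e1: "n - m + r = n - 2 * (m div 2)" using dm assms(5) by linarith
    have ev: "even (n - m + r)" unfolding e1 using assms(2) by (intro dvd_diff_nat) simp_all
    have "2 * M = n - m + r" unfolding M_def by (rule even_two_times_div_two[OF ev])
    hence "2 * Suc M = n - m + r + 2" by simp
    hence "2 * Suc M - r = n - m + 2" by simp
    hence "f (Suc M) = cc a (n+1) (n - m + 2) m" unfolding f_def by simp
    also have "\<dots> = 0" by (rule cc_Z) (use assms in auto)
    finally show ?thesis .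
  qed
  finally show ?thesis unfolding r_def M_def by simp
qed

end
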